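(* Let $n,N\ge 1$ be integers, let $\Phi:\mathbb{R}^n\times\mathbb{R}\to\mathbb{R}$ and $F:\mathbb{R}^n\times\mathbb{R}\to\mathbb{R}^n$ be twice continuously differentiable, and fix an initial state $x_0\in\mathbb{R}^n$. For a control vector $z=[u_0,u_1,\dots,u_N]^T\in\mathbb{R}^{N+1}$ (scalar controls $u_k\in\mathbb{R}$), define the states recursively by $x_{k+1}=F(x_k,u_k)$, $k=0,1,\dots,N-1$, and the cost $$J(x_0,z)=\sum_{k=0}^{N}\Phi(x_k,u_k),$$ regarded as a function of $z$ (each $x_k$ being a function of $x_0,u_0,\dots,u_{k-1}$). Define the Hamiltonian $H(x,u,\lambda)=\Phi(x,u)+\lambda^TF(x,u)$ for $x,\lambda\in\mathbb{R}^n$, $u\in\mathbb{R}$, and set $$G(x,u,\lambda)=\frac{\partial H(x,u,\lambda)}{\partial x}\in\mathbb{R}^n,\qquad L(x,u,\lambda)=\frac{\partial H(x,u,\lambda)}{\partial u}\in\mathbb{R}.$$ Define costates by the backward recursion $\lambda_{N+1}=\mathbf{0}$ and $\lambda_k=G(x_k,u_k,\lambda_{k+1})$ for $k=N,N-1,\dots,1$. Fix $i\in\{0,1,\dots,N\}$. For $k=0,1,\dots,N$ and $x,\lambda,\alpha,\beta\in\mathbb{R}^n$, $u\in\mathbb{R}$, define $$H_i^{(k)}(x,u,\lambda,\alpha,\beta)=\begin{cases}L(x,u,\lambda)+\alpha^TF(x,u)+\beta^TG(x,u,\lambda), & k=i,\\ \alpha^TF(x,u)+\beta^TG(x,u,\lambda),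 & k\neq i.\end{cases}$$ Define vectors $\beta_k,\alpha_k\in\mathbb{R}^n$ by the forward recursion $\beta_0=\mathbf{0}$, $$\beta_{k+1}=\frac{\partial H_i^{(k)}(x_k,u_k,\lambda_{k+1},\alpha_{k+1},\beta_k)}{\partial \lambda}\quad(k=0,1,\dots,N-1),$$ (the partial derivative with respect to the third argument), and the backward recursion $\alpha_{N+1}=\mathbf{0}$, $$\alpha_k=\frac{\partial H_i^{(k)}(x_k,u_k,\lambda_{k+1},\alpha_{k+1},\beta_k)}{\partial x}\quad(k=N,N-1,\dots,1)$$ (the partial derivative with respect to the first argument). Write $H^i_k=H_i^{(k)}(x_k,u_k,\lambda_{k+1},\alpha_{k+1},\beta_k)$. Then the $i$th row of the Hessian matrix $\nabla^2 J$ of $J(x_0,\cdot)$ with respect to $z$, evaluated at $z$, is $$\nabla^2 J(i)=\left[\frac{\partial H^i_0}{\partial u_0},\frac{\partial H^i_1}{\partial u_1},\dots,\frac{\partial H^i_N}{\partial u_N}\right],$$ where $\frac{\partial H^i_k}{\partial u_k}$ denotes the partial derivative of $H_i^{(k)}$ with respect to its second argument, evaluated at $(x_k,u_k,\lambda_{k+1},\alpha_{k+1},\beta_k)$.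
   Context: Rows and columns of the Hessian are indexed by $0,1,\dots,N$, corresponding to the components $u_0,\dots,u_N$ of $z$. $\mathbf{0}$ denotes the zero vector in $\mathbb{R}^n$. Partial derivatives with respect to vector arguments are column vectors (gradients). The paper treats the case of scalar controls $u_k$, stating that the extension to vector controls is analogous. The quantity $L(x_i,u_i,\lambda_{i+1})$, viewed as a function of $z$ through the state and costate recursions, equals the $i$th component $\partial J/\partial u_i$ of the gradient of $J$. *)

theory Defs
  imports "HOL-Analysis.Analysis"
begin

definition C2 :: "('a::euclidean_space \<Rightarrow> 'b::real_normed_vector) \<Rightarrow> bool" where
  "C2 f \<longleftrightarrow> (\<exists>f' f''. (\<forall>p. (f has_derivative blinfun_apply (f' p)) (at p)) \<and>
                        (\<forall>p. (f' has_derivative blinfun_apply (f'' p)) (at p)) \<and>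
                        continuous_on UNIV f'')"

definition grad :: "(real^'n \<Rightarrow> real) \<Rightarrow> real^'n \<Rightarrow> real^'n" where
  "grad f x = (\<chi> j. deriv (\<lambda>t. f (x + t *\<^sub>R axis j 1)) 0)"

text \<open>States: x_0 given, x_{k+1} = F(x_k,u_k); the control vector z = [u_0..u_N] is
  represented as a function nat => real (only components 0..N are used).\<close>
primrec state :: "(real^'n \<Rightarrow> real \<Rightarrow> real^'n) \<Rightarrow> real^'n \<Rightarrow> (nat \<Rightarrow> real) \<Rightarrow> nat \<Rightarrow> real^'n" where
  "state F x0 z 0 = x0"
| "state F x0 z (Suc k) = F (state F x0 z k) (z k)"

definition cost :: "(real^'n \<Rightarrow> real \<Rightarrow> real) \<Rightarrow> (real^'n \<Rightarrow> real \<Rightarrow> real^'n) \<Rightarrow> nat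
    \<Rightarrow> real^'n \<Rightarrow> (nat \<Rightarrow> real) \<Rightarrow> real" where
  "cost \<Phi> F N x0 z = (\<Sum>k=0..N. \<Phi> (state F x0 z k) (z k))"

definition Ham :: "(real^'n \<Rightarrow> real \<Rightarrow> real) \<Rightarrow> (real^'n \<Rightarrow> real \<Rightarrow> real^'n)
    \<Rightarrow> real^'n \<Rightarrow> real \<Rightarrow> real^'n \<Rightarrow> real" where
  "Ham \<Phi> F x u l = \<Phi> x u + l \<bullet> F x u"

definition Gx :: "(real^'n \<Rightarrow> real \<Rightarrow> real) \<Rightarrow> (real^'n \<Rightarrow> real \<Rightarrow> real^'n)
    \<Rightarrow> real^'n \<Rightarrow> real \<Rightarrow> real^'n \<Rightarrow> real^'n" where
  "Gx \<Phi> F x u l = grad (\<lambda>y. Ham \<Phi> F y u l) x"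

definition Lu :: "(real^'n \<Rightarrow> real \<Rightarrow> real) \<Rightarrow> (real^'n \<Rightarrow> real \<Rightarrow> real^'n)
    \<Rightarrow> real^'n \<Rightarrow> real \<Rightarrow> real^'n \<Rightarrow> real" where
  "Lu \<Phi> F x u l = deriv (\<lambda>v. Ham \<Phi> F x v l) u"

definition Hik :: "(real^'n \<Rightarrow> real \<Rightarrow> real) \<Rightarrow> (real^'n \<Rightarrow> real \<Rightarrow> real^'n) \<Rightarrow> nat \<Rightarrow> nat
    \<Rightarrow> real^'n \<Rightarrow> real \<Rightarrow> real^'n \<Rightarrow> real^'n \<Rightarrow> real^'n \<Rightarrow> real" where
  "Hik \<Phi> F i k x u l a b =
     (if k = i then Lu \<Phi> F x u l + a \<bullet> F x u + b \<bullet> Gx \<Phi> F x u l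
      else a \<bullet> F x u + b \<bullet> Gx \<Phi> F x u l)"

definition partial_u :: "((nat \<Rightarrow> real) \<Rightarrow> real) \<Rightarrow> nat \<Rightarrow> (nat \<Rightarrow> real) \<Rightarrow> real" where
  "partial_u f i z = deriv (\<lambda>s. f (z(i := s))) (z i)"

definition hessian_entry :: "((nat \<Rightarrow> real) \<Rightarrow> real) \<Rightarrow> (nat \<Rightarrow> real) \<Rightarrow> nat \<Rightarrow> nat \<Rightarrow> real" where
  "hessian_entry f z i j = partial_u (partial_u f i) j z"

end

theory Submission
  imports Defs "HOL-Library.Product_Plus"
begin


lemma vd_chain:
  assumes "(f has_vector_derivative v) (at s)" "(g has_derivative g') (at (f s))"
  shows "((\<lambda>t. g (f t)) has_vector_derivative g' v) (at s)"
proof -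
  have "((g \<circ> f) has_derivative (g' \<circ> (\<lambda>h. h *\<^sub>R v))) (at s)"
    using assms by (intro diff_chain_at) (auto simp: has_vector_derivative_def)
  moreover have "linear g'" using assms(2) has_derivative_linear by blast
  ultimately show ?thesis
    by (simp add: has_vector_derivative_def o_def linear_scale)
qed

lemma GL:
  fixes h :: "real^'n \<Rightarrow> real \<Rightarrow> real^'n \<Rightarrow> real"
  assumes D: "((\<lambda>(x,u,l). h x u l) has_derivative D) (at (x0,u0,l0))"
  shows "D (dx,du,dl) = grad (\<lambda>y. h y u0 l0) x0 \<bullet> dx + deriv (\<lambda>v. h x0 v l0) u0 * du
            + grad (\<lambda>l. h x0 u0 l) l0 \<bullet> dl"
proof -
  let ?h = "\<lambda>(x,u,l). h x u l"
  have lin: "linear D" using D has_derivative_linear by blast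
  have sc: "\<And>c v. c * D v = D (c *\<^sub>R v)" using linear_scale[OF lin] by simp
  have gx: "grad (\<lambda>y. h y u0 l0) x0 = (\<chi> j. D (axis j 1, 0, 0))"
    unfolding grad_def
  proof (rule vec_eq_iff[THEN iffD2], intro allI, simp)
    fix j
    have "((\<lambda>t. (x0 + t *\<^sub>R axis j 1, u0, l0)) has_vector_derivative (axis j 1, 0, 0)) (at 0)"
      by (auto intro!: derivative_eq_intros simp: zero_prod_def)
    from vd_chain[OF this, of ?h D] D
    have "((\<lambda>t. h (x0 + t *\<^sub>R axis j 1) u0 l0) has_vector_derivative D (axis j 1, 0, 0)) (at 0)"
      by simp
    then show "deriv (\<lambda>t. h (x0 + t *\<^sub>R axis j 1) u0 l0) 0 = D (axis j 1, 0, 0)"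
      by (intro DERIV_imp_deriv) (simp add: has_real_derivative_iff_has_vector_derivative)
  qed
  have gl: "grad (\<lambda>l. h x0 u0 l) l0 = (\<chi> j. D (0, 0, axis j 1))"
    unfolding grad_def
  proof (rule vec_eq_iff[THEN iffD2], intro allI, simp)
    fix j
    have "((\<lambda>t. (x0, u0, l0 + t *\<^sub>R axis j 1)) has_vector_derivative (0, 0, axis j 1)) (at 0)"
      by (auto intro!: derivative_eq_intros simp: zero_prod_def)
    from vd_chain[OF this, of ?h D] D
    have "((\<lambda>t. h x0 u0 (l0 + t *\<^sub>R axis j 1)) has_vector_derivative D (0, 0, axis j 1)) (at 0)"
      by simp
    then show "deriv (\<lambda>t. h x0 u0 (l0 + t *\<^sub>R axis j 1)) 0 = D (0, 0, axis j 1)"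
      by (intro DERIV_imp_deriv) (simp add: has_real_derivative_iff_has_vector_derivative)
  qed
  have gu: "deriv (\<lambda>v. h x0 v l0) u0 = D (0, 1, 0)"
  proof -
    have "((\<lambda>t. (x0, t, l0)) has_vector_derivative (0, 1, 0)) (at u0)"
      by (auto intro!: derivative_eq_intros simp: zero_prod_def)
    from vd_chain[OF this, of ?h D] D
    have "((\<lambda>t. h x0 t l0) has_vector_derivative D (0, 1, 0)) (at u0)"
      by simp
    then show ?thesis
      by (intro DERIV_imp_deriv) (simp add: has_real_derivative_iff_has_vector_derivative)
  qed
  have e1: "(\<chi> j. D (axis j 1, 0, 0)) \<bullet> dx = D (dx, 0, 0)"
  proof -
    have "(\<chi> j. D (axis j 1, 0, 0)) \<bullet> dx = (\<Sum>j\<in>UNIV. dx $ j * D (axis j 1, 0, 0))"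
      by (simp add: inner_vec_def mult.commute)
    also have "\<dots> = (\<Sum>j\<in>UNIV. D ((dx $ j) *\<^sub>R (axis j 1, 0, 0)))"
      by (intro sum.cong refl) (rule sc)
    also have "\<dots> = D (\<Sum>j\<in>UNIV. (dx $ j) *\<^sub>R (axis j 1, 0::real, 0::real^'n))"
      using lin by (simp add: linear_sum)
    also have "(\<Sum>j\<in>UNIV. (dx $ j) *\<^sub>R (axis j 1, 0::real, 0::real^'n)) = (dx, 0, 0)"
    proof -
      have "(\<Sum>j\<in>UNIV. (dx $ j) *\<^sub>R (axis j 1, 0::real, 0::real^'n))
          = ((\<Sum>j\<in>UNIV. (dx $ j) *\<^sub>R axis j (1::real)), 0, 0)"
        by (simp add: sum_prod)
      also have "(\<Sum>j\<in>UNIV. (dx $ j) *\<^sub>R axis j (1::real)) = dx"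
        using basis_expansion[of dx] by (simp add: scalar_mult_eq_scaleR)
      finally show ?thesis .
    qed
    finally show ?thesis .
  qed
  have e3: "(\<chi> j. D (0, 0, axis j 1)) \<bullet> dl = D (0, 0, dl)"
  proof -
    have "(\<chi> j. D (0, 0, axis j 1)) \<bullet> dl = (\<Sum>j\<in>UNIV. dl $ j * D (0, 0, axis j 1))"
      by (simp add: inner_vec_def mult.commute)
    also have "\<dots> = (\<Sum>j\<in>UNIV. D ((dl $ j) *\<^sub>R (0, 0, axis j 1)))"
      by (intro sum.cong refl) (rule sc)
    also have "\<dots> = D (\<Sum>j\<in>UNIV. (dl $ j) *\<^sub>R (0::real^'n, 0::real, axis j 1))"
      using lin by (simp add: linear_sum)
    also have "(\<Sum>j\<in>UNIV. (dl $ j) *\<^sub>R (0::real^'n, 0::real, axis j 1)) = (0, 0, dl)"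
    proof -
      have "(\<Sum>j\<in>UNIV. (dl $ j) *\<^sub>R (0::real^'n, 0::real, axis j 1))
          = (0, 0, (\<Sum>j\<in>UNIV. (dl $ j) *\<^sub>R axis j (1::real)))"
        by (simp add: sum_prod)
      also have "(\<Sum>j\<in>UNIV. (dl $ j) *\<^sub>R axis j (1::real)) = dl"
        using basis_expansion[of dl] by (simp add: scalar_mult_eq_scaleR)
      finally show ?thesis .
    qed
    finally show ?thesis .
  qed
  have e2: "D (0, 1, 0) * du = D (0, du, 0)"
    using linear_scale[OF lin, of du "(0,1,0)"] by simp
  have "D (dx,du,dl) = D ((dx,0,0) + (0,du,0) + (0,0,dl))" by simp
  also have "\<dots> = D (dx,0,0) + D (0,du,0) + D (0,0,dl)"
    by (simp only: linear_add[OF lin])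
  finally show ?thesis using gx gu gl e1 e2 e3 by simp
qed



lemma comp12:
  assumes "\<And>q. (G has_derivative blinfun_apply (G' q)) (at q)"
  shows "((\<lambda>p::(real^'n) \<times> real \<times> (real^'n). G (fst p, fst (snd p))) has_derivative
           (\<lambda>h. G' (fst p, fst (snd p)) (fst h, fst (snd h)))) (at p)"
proof -
  have "((G \<circ> (\<lambda>p::(real^'n) \<times> real \<times> (real^'n). (fst p, fst (snd p)))) has_derivative
           (G' (fst p, fst (snd p)) \<circ> (\<lambda>h. (fst h, fst (snd h))))) (at p)"
    by (rule diff_chain_at) (auto intro!: derivative_eq_intros assms)
  then show ?thesis by (simp add: o_def)
qed

lemma Ham_deriv:
  assumes dP: "\<And>q. ((\<lambda>(x,u). \<Phi> x u) has_derivative blinfun_apply (P1 q)) (at q)"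
    and dF: "\<And>q. ((\<lambda>(x,u). F x u) has_derivative blinfun_apply (F1 q)) (at q)"
  shows "((\<lambda>(x,u,l). Ham \<Phi> F x u l) has_derivative
     (\<lambda>(dx,du,dl). P1 (x,u) (dx,du) + (dl \<bullet> F x u + l \<bullet> F1 (x,u) (dx,du)))) (at (x,u,l))"
proof -
  have e: "(\<lambda>(x,u,l). Ham \<Phi> F x u l) = (\<lambda>p. (\<lambda>(x,u). \<Phi> x u) (fst p, fst (snd p))
              + snd (snd p) \<bullet> (\<lambda>(x,u). F x u) (fst p, fst (snd p)))"
    by (auto simp: Ham_def)
  have e2: "(\<lambda>(dx,du,dl). P1 (x,u) (dx,du) + (dl \<bullet> F x u + l \<bullet> F1 (x,u) (dx,du)))
     = (\<lambda>h. P1 (fst (x,u,l), fst (snd (x,u,l))) (fst h, fst (snd h)) +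
          (snd (snd (x,u,l)) \<bullet> F1 (fst (x,u,l), fst (snd (x,u,l))) (fst h, fst (snd h)) +
           snd (snd h) \<bullet> (\<lambda>(x,u). F x u) (fst (x,u,l), fst (snd (x,u,l)))))"
    by (auto simp: fun_eq_iff inner_commute)
  show ?thesis unfolding e e2
    by (intro has_derivative_add comp12[OF dP] has_derivative_inner comp12[OF dF]
          has_derivative_snd has_derivative_ident)
qed

lemma Lu_eq:
  assumes dP: "\<And>q. ((\<lambda>(x,u). \<Phi> x u) has_derivative blinfun_apply (P1 q)) (at q)"
    and dF: "\<And>q. ((\<lambda>(x,u). F x u) has_derivative blinfun_apply (F1 q)) (at q)"
  shows "Lu \<Phi> F x u l = P1 (x,u) (0,1) + l \<bullet> F1 (x,u) (0,1)"
  using GL[OF Ham_deriv[OF dP dF, of x u l], where dx=0 and du=1 and dl=0] unfolding Lu_def by simp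

lemma Gx_eq:
  assumes dP: "\<And>q. ((\<lambda>(x,u). \<Phi> x u) has_derivative blinfun_apply (P1 q)) (at q)"
    and dF: "\<And>q. ((\<lambda>(x,u). F x u) has_derivative blinfun_apply (F1 q)) (at q)"
  shows "Gx \<Phi> F x u l $ j = P1 (x,u) (axis j 1,0) + l \<bullet> F1 (x,u) (axis j 1,0)"
  using GL[OF Ham_deriv[OF dP dF, of x u l], where dx="axis j 1" and du=0 and dl=0] unfolding Gx_def by (simp add: inner_axis)



lemma Hik_diff:
  assumes dP: "\<And>q. ((\<lambda>(x,u). \<Phi> x u) has_derivative blinfun_apply (P1 q)) (at q)"
    and dF: "\<And>q. ((\<lambda>(x,u). F x u) has_derivative blinfun_apply (F1 q)) (at q)"
    and dP1: "\<And>q. (P1 has_derivative blinfun_apply (P2 q)) (at q)"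
    and dF1: "\<And>q. (F1 has_derivative blinfun_apply (F2 q)) (at q)"
  shows "\<exists>D. ((\<lambda>(x,u,l). Hik \<Phi> F i k x u l a b) has_derivative D) (at p)"
proof -
  let ?g = "\<lambda>p::(real^'n) \<times> real \<times> (real^'n). (fst p, fst (snd p))"
  let ?c = "if k = i then 1 else (0::real)"
  have e: "(\<lambda>(x,u,l). Hik \<Phi> F i k x u l a b) = (\<lambda>p.
     ?c * (P1 (?g p) (0,1) + snd (snd p) \<bullet> F1 (?g p) (0,1))
     + a \<bullet> (\<lambda>(x,u). F x u) (?g p)
     + (\<Sum>j\<in>UNIV. b $ j * (P1 (?g p) (axis j 1,0) + snd (snd p) \<bullet> F1 (?g p) (axis j 1,0))))"
    by (auto simp: fun_eq_iff Hik_def Lu_eq[OF dP dF] inner_vec_def[of b] Gx_eq[OF dP dF])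
  show ?thesis unfolding e
    apply (rule exI)
    apply (rule has_derivative_add has_derivative_mult has_derivative_const has_derivative_sum has_derivative_inner blinfun.FDERIV comp12[OF dP1] comp12[OF dF1] comp12[OF dF] has_derivative_snd has_derivative_ident)+
    done
qed



primrec cst :: "(real^'n \<Rightarrow> real \<Rightarrow> real) \<Rightarrow> (real^'n \<Rightarrow> real \<Rightarrow> real^'n) \<Rightarrow> real^'n
   \<Rightarrow> nat \<Rightarrow> (nat \<Rightarrow> real) \<Rightarrow> nat \<Rightarrow> real^'n" where
  "cst \<Phi> F x0 N z 0 = 0"
| "cst \<Phi> F x0 N z (Suc m) = Gx \<Phi> F (state F x0 z (N - m)) (z (N - m)) (cst \<Phi> F x0 N z m)"

definition lamf where "lamf \<Phi> F x0 N z k = cst \<Phi> F x0 N z (N + 1 - k)"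

lemma lamf_end: "lamf \<Phi> F x0 N z (N+1) = 0"
  by (simp add: lamf_def)

lemma lamf_rec: "k \<le> N \<Longrightarrow>
   lamf \<Phi> F x0 N z k = Gx \<Phi> F (state F x0 z k) (z k) (lamf \<Phi> F x0 N z (k+1))"
  unfolding lamf_def by (simp add: Suc_diff_le)

lemma vd_inner:
  assumes "(X has_vector_derivative v) (at s)"
  shows "((\<lambda>t. a \<bullet> X t) has_vector_derivative a \<bullet> v) (at s)"
  using assms unfolding has_vector_derivative_def
  by (auto intro!: derivative_eq_intros)

lemma vd_upd:
  "((\<lambda>s. (z(j := s)) k) has_vector_derivative (if k = j then 1 else 0)) (at s0)"
  by (cases "k = j") (auto intro!: derivative_eq_intros)

locale setting =
  fixes \<Phi> :: "real^'n \<Rightarrow> real \<Rightarrow> real" and F :: "real^'n \<Rightarrow> real \<Rightarrow> real^'n"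
    and P1 P2 F1 F2
  assumes dP: "\<And>q. ((\<lambda>(x,u). \<Phi> x u) has_derivative blinfun_apply (P1 q)) (at q)"
    and dF: "\<And>q. ((\<lambda>(x,u). F x u) has_derivative blinfun_apply (F1 q)) (at q)"
    and dP1: "\<And>q. (P1 has_derivative blinfun_apply (P2 q)) (at q)"
    and dF1: "\<And>q. (F1 has_derivative blinfun_apply (F2 q)) (at q)"
begin

lemma vd_F:
  assumes "(X has_vector_derivative xv) (at s)" "(U has_vector_derivative uv) (at s)"
  shows "((\<lambda>t. F (X t) (U t)) has_vector_derivative F1 (X s, U s) (xv, uv)) (at s)"
  using vd_chain[OF has_vector_derivative_Pair[OF assms], of "\<lambda>(x,u). F x u"] dF by simp

lemma vd_Phi:
  assumes "(X has_vector_derivative xv) (at s)" "(U has_vector_derivative uv) (at s)"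
  shows "((\<lambda>t. \<Phi> (X t) (U t)) has_vector_derivative P1 (X s, U s) (xv, uv)) (at s)"
  using vd_chain[OF has_vector_derivative_Pair[OF assms], of "\<lambda>(x,u). \<Phi> x u"] dP by simp

lemma vd_3:
  fixes h :: "real^'n \<Rightarrow> real \<Rightarrow> real^'n \<Rightarrow> real"
  assumes "((\<lambda>(x,u,l). h x u l) has_derivative D) (at (X s, U s, L s))"
    "(X has_vector_derivative xv) (at s)" "(U has_vector_derivative uv) (at s)"
    "(L has_vector_derivative lv) (at s)"
  shows "((\<lambda>t. h (X t) (U t) (L t)) has_vector_derivative
      grad (\<lambda>y. h y (U s) (L s)) (X s) \<bullet> xv + deriv (\<lambda>v. h (X s) v (L s)) (U s) * uv
            + grad (\<lambda>l. h (X s) (U s) l) (L s) \<bullet> lv) (at s)"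
proof -
  have "((\<lambda>t. (X t, U t, L t)) has_vector_derivative (xv, uv, lv)) (at s)"
    by (intro has_vector_derivative_Pair assms)
  from vd_chain[OF this, of "\<lambda>(x,u,l). h x u l" D] assms(1)
  have "((\<lambda>t. h (X t) (U t) (L t)) has_vector_derivative D (xv, uv, lv)) (at s)" by simp
  then show ?thesis using GL[OF assms(1), of xv uv lv] by simp
qed

lemma Gx_diff: "\<exists>D. ((\<lambda>(x,u,l). Gx \<Phi> F x u l) has_derivative D) (at p)"
proof -
  let ?g = "\<lambda>p::(real^'n) \<times> real \<times> (real^'n). (fst p, fst (snd p))"
  have e: "(\<lambda>(x,u,l). Gx \<Phi> F x u l) = (\<lambda>p.
     (\<Sum>j\<in>UNIV. (P1 (?g p) (axis j 1,0) + snd (snd p) \<bullet> F1 (?g p) (axis j 1,0)) *\<^sub>R axis j 1))"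
  proof (rule ext, clarsimp)
    fix x u l
    show "Gx \<Phi> F x u l = (\<Sum>j\<in>UNIV. (P1 (x,u) (axis j 1,0) + l \<bullet> F1 (x,u) (axis j 1,0)) *\<^sub>R axis j 1)"
      using basis_expansion[of "Gx \<Phi> F x u l"]
      by (simp add: Gx_eq[OF dP dF] scalar_mult_eq_scaleR)
  qed
  show ?thesis unfolding e
    apply (rule exI)
    apply (rule has_derivative_add has_derivative_mult has_derivative_const has_derivative_scaleR
        has_derivative_sum has_derivative_inner blinfun.FDERIV comp12[OF dP1] comp12[OF dF1]
        comp12[OF dF] has_derivative_snd has_derivative_ident)+
    done
qed

lemma curve_X: "\<exists>v. ((\<lambda>s. state F x0 (z(j:=s)) k) has_vector_derivative v) (at s0)"
proof (induction k)
  case 0 then show ?case by (auto intro: exI[of _ 0])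
next
  case (Suc k)
  then obtain v where "((\<lambda>s. state F x0 (z(j:=s)) k) has_vector_derivative v) (at s0)" by blast
  from vd_F[OF this vd_upd[of z j k]] show ?case unfolding state.simps by (rule exI)
qed

lemma curve_L:
  assumes "k \<le> N + 1"
  shows "\<exists>v. ((\<lambda>s. lamf \<Phi> F x0 N (z(j:=s)) k) has_vector_derivative v) (at s0)"
  using assms
proof (induction rule: inc_induct)
  case base
  then show ?case by (auto simp: lamf_def intro: exI[of _ 0])
next
  case (step n)
  then obtain v where v: "((\<lambda>s. lamf \<Phi> F x0 N (z(j:=s)) (Suc n)) has_vector_derivative v) (at s0)"
    by blast
  obtain xv where xv: "((\<lambda>s. state F x0 (z(j:=s)) n) has_vector_derivative xv) (at s0)"
    using curve_X by blast
  have "((\<lambda>s. (state F x0 (z(j:=s)) n, (z(j:=s)) n, lamf \<Phi> F x0 N (z(j:=s)) (Suc n)))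
     has_vector_derivative (xv, (if n = j then 1 else 0), v)) (at s0)" (is ?c1)
    by (intro has_vector_derivative_Pair xv v vd_upd)
  moreover obtain D where c2: "((\<lambda>(x,u,l). Gx \<Phi> F x u l) has_derivative D)
     (at (state F x0 (z(j:=s0)) n, (z(j:=s0)) n, lamf \<Phi> F x0 N (z(j:=s0)) (Suc n)))"
    using Gx_diff by blast
  ultimately have d: "((\<lambda>s. Gx \<Phi> F (state F x0 (z(j:=s)) n) ((z(j:=s)) n) (lamf \<Phi> F x0 N (z(j:=s)) (Suc n)))
     has_vector_derivative D (xv, (if n = j then 1 else 0), v)) (at s0)"
    using vd_chain[OF \<open>?c1\<close>, of "\<lambda>(x,u,l). Gx \<Phi> F x u l" D] c2 by simp
  have eq: "(\<lambda>s. lamf \<Phi> F x0 N (z(j:=s)) n) = (\<lambda>s.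
      Gx \<Phi> F (state F x0 (z(j:=s)) n) ((z(j:=s)) n) (lamf \<Phi> F x0 N (z(j:=s)) (Suc n)))"
    using step(2) lamf_rec[of n N \<Phi> F x0] by simp
  show ?case unfolding eq using d by (rule exI)
qed

lemma FO:
  assumes iN: "i \<le> N"
  shows "partial_u (cost \<Phi> F N x0) i z = Lu \<Phi> F (state F x0 z i) (z i) (lamf \<Phi> F x0 N z (i+1))"
proof -
  define t0 where "t0 = z i"
  define lm where "lm = lamf \<Phi> F x0 N z"
  define Ud where "Ud = (\<lambda>k. if k = i then 1 else (0::real))"
  have "\<forall>k. \<exists>v. ((\<lambda>t. state F x0 (z(i:=t)) k) has_vector_derivative v) (at t0)"
    using curve_X by blast
  then obtain Xd where Xd: "\<And>k. ((\<lambda>t. state F x0 (z(i:=t)) k) has_vector_derivative Xd k) (at t0)"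
    by metis
  have zt0: "z(i := t0) = z" by (simp add: t0_def)
  have Xd0: "Xd 0 = 0"
    using vector_derivative_unique_at[OF Xd[of 0]] by simp
  have XdS: "Xd (Suc k) = F1 (state F x0 z k, z k) (Xd k, Ud k)" for k
  proof -
    have "((\<lambda>t. state F x0 (z(i:=t)) (Suc k)) has_vector_derivative
        F1 (state F x0 (z(i:=t0)) k, (z(i:=t0)) k) (Xd k, Ud k)) (at t0)"
      unfolding state.simps Ud_def by (rule vd_F[OF Xd vd_upd])
    then show ?thesis using vector_derivative_unique_at[OF Xd[of "Suc k"]] zt0 by simp
  qed
  have dPhi: "((\<lambda>t. \<Phi> (state F x0 (z(i:=t)) k) ((z(i:=t)) k)) has_vector_derivative
      P1 (state F x0 z k, z k) (Xd k, Ud k)) (at t0)" for k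
    using vd_Phi[OF Xd vd_upd[of z i k t0]] zt0 unfolding Ud_def by simp
  have KI: "P1 (state F x0 z k, z k) (Xd k, Ud k) + lm (Suc k) \<bullet> Xd (Suc k)
      = lm k \<bullet> Xd k + Ud k * Lu \<Phi> F (state F x0 z k) (z k) (lm (Suc k))" if kN: "k \<le> N" for k
  proof -
    have a: "((\<lambda>t. Ham \<Phi> F (state F x0 (z(i:=t)) k) ((z(i:=t)) k) (lm (Suc k))) has_vector_derivative
      Gx \<Phi> F (state F x0 z k) (z k) (lm (Suc k)) \<bullet> Xd k + Lu \<Phi> F (state F x0 z k) (z k) (lm (Suc k)) * Ud k
       + grad (\<lambda>l. Ham \<Phi> F (state F x0 z k) (z k) l) (lm (Suc k)) \<bullet> 0) (at t0)"
      using vd_3[of "Ham \<Phi> F", OF _ Xd vd_upd[of z i k t0] has_vector_derivative_const[of "lm (Suc k)"],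
          OF Ham_deriv[OF dP dF]] zt0
      unfolding Gx_def Lu_def Ud_def by simp
    have b: "((\<lambda>t. Ham \<Phi> F (state F x0 (z(i:=t)) k) ((z(i:=t)) k) (lm (Suc k))) has_vector_derivative
       P1 (state F x0 z k, z k) (Xd k, Ud k) + lm (Suc k) \<bullet> Xd (Suc k)) (at t0)"
      unfolding Ham_def XdS
      using has_vector_derivative_add[OF dPhi vd_inner[OF vd_F[OF Xd vd_upd[of z i k t0]]]] zt0
      unfolding Ud_def by simp
    have "Gx \<Phi> F (state F x0 z k) (z k) (lm (Suc k)) = lm k"
      using lamf_rec[OF kN, of \<Phi> F x0 z] unfolding lm_def by simp
    then show ?thesis using vector_derivative_unique_at[OF a b] by (simp add: mult.commute)
  qed
  have dJ: "((\<lambda>t. cost \<Phi> F N x0 (z(i:=t))) has_vector_derivative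
      (\<Sum>k=0..N. P1 (state F x0 z k, z k) (Xd k, Ud k))) (at t0)"
    unfolding cost_def by (rule has_vector_derivative_sum, rule dPhi)
  have "(\<Sum>k=0..N. P1 (state F x0 z k, z k) (Xd k, Ud k))
      = (\<Sum>k=0..N. (lm k \<bullet> Xd k - lm (Suc k) \<bullet> Xd (Suc k)) + Ud k * Lu \<Phi> F (state F x0 z k) (z k) (lm (Suc k)))"
    by (rule sum.cong[OF refl]) (use KI in \<open>auto simp: algebra_simps\<close>)
  also have "\<dots> = (\<Sum>k=0..N. lm k \<bullet> Xd k - lm (Suc k) \<bullet> Xd (Suc k))
      + (\<Sum>k=0..N. Ud k * Lu \<Phi> F (state F x0 z k) (z k) (lm (Suc k)))"
    by (rule sum.distrib)
  also have "(\<Sum>k=0..N. lm k \<bullet> Xd k - lm (Suc k) \<bullet> Xd (Suc k)) = 0"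
    using sum_telescope[of "\<lambda>k. lm k \<bullet> Xd k" N]
    by (simp add: atLeast0AtMost Xd0 lm_def lamf_def)
  also have "(\<Sum>k=0..N. Ud k * Lu \<Phi> F (state F x0 z k) (z k) (lm (Suc k)))
      = Lu \<Phi> F (state F x0 z i) (z i) (lm (Suc i))"
    using iN by (simp add: Ud_def if_distrib[of "\<lambda>x. x * _"] sum.delta cong: if_cong)
  finally have "((\<lambda>t. cost \<Phi> F N x0 (z(i:=t))) has_vector_derivative
      Lu \<Phi> F (state F x0 z i) (z i) (lm (Suc i))) (at t0)" using dJ by simp
  then show ?thesis unfolding partial_u_def t0_def lm_def
    by (intro DERIV_imp_deriv) (simp add: has_real_derivative_iff_has_vector_derivative)
qed

lemma SO:
  fixes \<alpha> \<beta> :: "nat \<Rightarrow> real^'n"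
  assumes iN: "i \<le> N" and jN: "j \<le> N"
    and beta_0: "\<beta> 0 = 0"
    and beta_rec: "\<And>k. k < N \<Longrightarrow>
        \<beta> (k + 1) = grad (\<lambda>l. Hik \<Phi> F i k (state F x0 z k) (z k) l (\<alpha> (k + 1)) (\<beta> k))
                          (lamf \<Phi> F x0 N z (k + 1))"
    and alpha_end: "\<alpha> (N + 1) = 0"
    and alpha_rec: "\<And>k. 1 \<le> k \<Longrightarrow> k \<le> N \<Longrightarrow>
        \<alpha> k = grad (\<lambda>y. Hik \<Phi> F i k y (z k) (lamf \<Phi> F x0 N z (k + 1)) (\<alpha> (k + 1)) (\<beta> k))
                     (state F x0 z k)"
  shows "hessian_entry (cost \<Phi> F N x0) z i j =
           deriv (\<lambda>v. Hik \<Phi> F i j (state F x0 z j) v (lamf \<Phi> F x0 N z (j + 1)) (\<alpha> (j + 1)) (\<beta> j)) (z j)"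
proof -
  define s0 where "s0 = z j"
  define Ud where "Ud = (\<lambda>k. if k = j then 1 else (0::real))"
  define g where "g = (\<lambda>s. partial_u (cost \<Phi> F N x0) i (z(j:=s)))"
  define du where "du = (\<lambda>k. deriv (\<lambda>v. Hik \<Phi> F i k (state F x0 z k) v (lamf \<Phi> F x0 N z (k + 1)) (\<alpha> (k + 1)) (\<beta> k)) (z k))"
  have zs0: "z(j := s0) = z" by (simp add: s0_def)
  have "\<forall>k. \<exists>v. ((\<lambda>s. state F x0 (z(j:=s)) k) has_vector_derivative v) (at s0)"
    using curve_X by blast
  then obtain Xd where Xd: "\<And>k. ((\<lambda>s. state F x0 (z(j:=s)) k) has_vector_derivative Xd k) (at s0)"
    by metis
  have "\<forall>k. \<exists>v. k \<le> N + 1 \<longrightarrow> ((\<lambda>s. lamf \<Phi> F x0 N (z(j:=s)) k) has_vector_derivative v) (at s0)"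
    using curve_L by blast
  then obtain Ld where Ld: "\<And>k. k \<le> N + 1 \<Longrightarrow>
      ((\<lambda>s. lamf \<Phi> F x0 N (z(j:=s)) k) has_vector_derivative Ld k) (at s0)"
    by metis
  have Xd0: "Xd 0 = 0"
    using vector_derivative_unique_at[OF Xd[of 0]] by simp
  have LdN: "Ld (Suc N) = 0"
    using vector_derivative_unique_at[OF Ld[of "Suc N"]] by (simp add: lamf_def)
  have geq: "g s = Lu \<Phi> F (state F x0 (z(j:=s)) i) ((z(j:=s)) i) (lamf \<Phi> F x0 N (z(j:=s)) (i+1))" for s
    unfolding g_def by (rule FO[OF iN])
  obtain DL where DL: "((\<lambda>(x,u,l). Hik \<Phi> F i i x u l 0 0) has_derivative DL)
     (at (state F x0 (z(j:=s0)) i, (z(j:=s0)) i, lamf \<Phi> F x0 N (z(j:=s0)) (Suc i)))"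
    using Hik_diff[OF dP dF dP1 dF1] by blast
  have LuH: "Hik \<Phi> F i i x u l 0 0 = Lu \<Phi> F x u l" for x u l by (simp add: Hik_def)
  obtain gd where gd: "(g has_vector_derivative gd) (at s0)"
    using vd_3[OF DL Xd vd_upd Ld[of "Suc i"]] iN unfolding LuH geq[abs_def] by auto
  have KI: "(if k = i then gd else 0) + \<alpha> (Suc k) \<bullet> Xd (Suc k) + \<beta> k \<bullet> Ld k
      = \<alpha> k \<bullet> Xd k + du k * Ud k + \<beta> (Suc k) \<bullet> Ld (Suc k)" if kN: "k \<le> N" for k
  proof -
    obtain D where D: "((\<lambda>(x,u,l). Hik \<Phi> F i k x u l (\<alpha> (Suc k)) (\<beta> k)) has_derivative D)
       (at (state F x0 (z(j:=s0)) k, (z(j:=s0)) k, lamf \<Phi> F x0 N (z(j:=s0)) (Suc k)))"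
      using Hik_diff[OF dP dF dP1 dF1] by blast
    have a: "((\<lambda>s. Hik \<Phi> F i k (state F x0 (z(j:=s)) k) ((z(j:=s)) k) (lamf \<Phi> F x0 N (z(j:=s)) (Suc k))
          (\<alpha> (Suc k)) (\<beta> k)) has_vector_derivative
        grad (\<lambda>y. Hik \<Phi> F i k y (z k) (lamf \<Phi> F x0 N z (Suc k)) (\<alpha> (Suc k)) (\<beta> k)) (state F x0 z k) \<bullet> Xd k
        + du k * Ud k
        + grad (\<lambda>l. Hik \<Phi> F i k (state F x0 z k) (z k) l (\<alpha> (Suc k)) (\<beta> k)) (lamf \<Phi> F x0 N z (Suc k))
            \<bullet> Ld (Suc k)) (at s0)"
      using vd_3[OF D Xd vd_upd Ld[of "Suc k"]] kN zs0 unfolding du_def Ud_def by simp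
    have eqf: "(\<lambda>s. Hik \<Phi> F i k (state F x0 (z(j:=s)) k) ((z(j:=s)) k) (lamf \<Phi> F x0 N (z(j:=s)) (Suc k))
          (\<alpha> (Suc k)) (\<beta> k)) = (\<lambda>s. (if k = i then g s else 0) + \<alpha> (Suc k) \<bullet> state F x0 (z(j:=s)) (Suc k)
           + \<beta> k \<bullet> lamf \<Phi> F x0 N (z(j:=s)) k)"
    proof (rule ext)
      fix s
      show "Hik \<Phi> F i k (state F x0 (z(j:=s)) k) ((z(j:=s)) k) (lamf \<Phi> F x0 N (z(j:=s)) (Suc k))
          (\<alpha> (Suc k)) (\<beta> k) = (if k = i then g s else 0) + \<alpha> (Suc k) \<bullet> state F x0 (z(j:=s)) (Suc k)
           + \<beta> k \<bullet> lamf \<Phi> F x0 N (z(j:=s)) k"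
        using lamf_rec[OF kN, of \<Phi> F x0 "z(j:=s)"] geq[of s]
        unfolding Hik_def state.simps by simp
    qed
    have gi: "((\<lambda>s. if k = i then g s else 0) has_vector_derivative (if k = i then gd else 0)) (at s0)"
      using gd by (cases "k = i") auto
    have b: "((\<lambda>s. Hik \<Phi> F i k (state F x0 (z(j:=s)) k) ((z(j:=s)) k) (lamf \<Phi> F x0 N (z(j:=s)) (Suc k))
          (\<alpha> (Suc k)) (\<beta> k)) has_vector_derivative
         (if k = i then gd else 0) + \<alpha> (Suc k) \<bullet> Xd (Suc k) + \<beta> k \<bullet> Ld k) (at s0)"
      unfolding eqf using kN
      by (intro has_vector_derivative_add gi vd_inner Xd Ld) simp
    have ax: "grad (\<lambda>y. Hik \<Phi> F i k y (z k) (lamf \<Phi> F x0 N z (Suc k)) (\<alpha> (Suc k)) (\<beta> k)) (state F x0 z k)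
         \<bullet> Xd k = \<alpha> k \<bullet> Xd k"
    proof (cases "k = 0")
      case True then show ?thesis by (simp add: Xd0)
    next
      case False then show ?thesis using alpha_rec[of k] kN by simp
    qed
    have bl: "grad (\<lambda>l. Hik \<Phi> F i k (state F x0 z k) (z k) l (\<alpha> (Suc k)) (\<beta> k)) (lamf \<Phi> F x0 N z (Suc k))
            \<bullet> Ld (Suc k) = \<beta> (Suc k) \<bullet> Ld (Suc k)"
    proof (cases "k < N")
      case True then show ?thesis using beta_rec[of k] by simp
    next
      case False then have "k = N" using kN by simp
      then show ?thesis by (simp add: LdN)
    qed
    show ?thesis using vector_derivative_unique_at[OF b a] ax bl by simp
  qed
  have KI': "(if k = i then gd else 0) - du k * Ud k
      = (\<alpha> k \<bullet> Xd k - \<alpha> (Suc k) \<bullet> Xd (Suc k)) - (\<beta> k \<bullet> Ld k - \<beta> (Suc k) \<bullet> Ld (Suc k))"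
    if "k \<in> {0..N}" for k
    using KI[of k] that by (simp add: algebra_simps)
  have "(\<Sum>k=0..N. (if k = i then gd else 0) - du k * Ud k)
     = (\<Sum>k=0..N. \<alpha> k \<bullet> Xd k - \<alpha> (Suc k) \<bullet> Xd (Suc k)) - (\<Sum>k=0..N. \<beta> k \<bullet> Ld k - \<beta> (Suc k) \<bullet> Ld (Suc k))"
    unfolding sum_subtractf[symmetric] by (rule sum.cong[OF refl KI'])
  also have "\<dots> = 0"
    using sum_telescope[of "\<lambda>k. \<alpha> k \<bullet> Xd k" N] sum_telescope[of "\<lambda>k. \<beta> k \<bullet> Ld k" N]
      alpha_end beta_0
    by (simp add: atLeast0AtMost Xd0 LdN)
  finally have "gd = du j"
    using iN jN by (simp add: sum_subtractf Ud_def if_distrib[of "\<lambda>x. _ * x"] sum.delta cong: if_cong)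
  moreover have "hessian_entry (cost \<Phi> F N x0) z i j = gd"
    unfolding hessian_entry_def partial_u_def[of "partial_u _ i"] g_def[symmetric] s0_def[symmetric]
    using gd by (intro DERIV_imp_deriv) (simp add: has_real_derivative_iff_has_vector_derivative)
  ultimately show ?thesis by (simp add: du_def)
qed

end



theorem theorem1:
  fixes \<Phi> :: "real^'n \<Rightarrow> real \<Rightarrow> real"
    and F :: "real^'n \<Rightarrow> real \<Rightarrow> real^'n"
    and N i :: nat
    and x0 :: "real^'n"
    and z :: "nat \<Rightarrow> real"
    and lam \<alpha> \<beta> :: "nat \<Rightarrow> real^'n"
  assumes N1: "N \<ge> 1"
    and C2_Phi: "C2 (\<lambda>(x, u). \<Phi> x u)"
    and C2_F: "C2 (\<lambda>(x, u). F x u)"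
    and i_le: "i \<le> N"
    and lam_end: "lam (N + 1) = 0"
    and lam_rec: "\<And>k. 1 \<le> k \<Longrightarrow> k \<le> N \<Longrightarrow>
        lam k = Gx \<Phi> F (state F x0 z k) (z k) (lam (k + 1))"
    and beta_0: "\<beta> 0 = 0"
    and beta_rec: "\<And>k. k < N \<Longrightarrow>
        \<beta> (k + 1) = grad (\<lambda>l. Hik \<Phi> F i k (state F x0 z k) (z k) l (\<alpha> (k + 1)) (\<beta> k))
                          (lam (k + 1))"
    and alpha_end: "\<alpha> (N + 1) = 0"
    and alpha_rec: "\<And>k. 1 \<le> k \<Longrightarrow> k \<le> N \<Longrightarrow>
        \<alpha> k = grad (\<lambda>y. Hik \<Phi> F i k y (z k) (lam (k + 1)) (\<alpha> (k + 1)) (\<beta> k))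
                     (state F x0 z k)"
  shows "\<forall>j \<le> N. hessian_entry (cost \<Phi> F N x0) z i j =
           deriv (\<lambda>v. Hik \<Phi> F i j (state F x0 z j) v (lam (j + 1)) (\<alpha> (j + 1)) (\<beta> j)) (z j)"
proof -
  obtain P1 P2 where dP: "\<And>q. ((\<lambda>(x,u). \<Phi> x u) has_derivative blinfun_apply (P1 q)) (at q)"
      and dP1: "\<And>q. (P1 has_derivative blinfun_apply (P2 q)) (at q)"
    using C2_Phi unfolding C2_def by blast
  obtain F1 F2 where dF: "\<And>q. ((\<lambda>(x,u). F x u) has_derivative blinfun_apply (F1 q)) (at q)"
      and dF1: "\<And>q. (F1 has_derivative blinfun_apply (F2 q)) (at q)"
    using C2_F unfolding C2_def by blast
  interpret setting \<Phi> F P1 P2 F1 F2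
    by unfold_locales (fact dP dF dP1 dF1)+
  have lam_eq: "1 \<le> k \<longrightarrow> lam k = lamf \<Phi> F x0 N z k" if "k \<le> N + 1" for k
    using that
  proof (induction rule: inc_induct)
    case base
    then show ?case using lam_end lamf_end[of \<Phi> F x0 N z] by simp
  next
    case (step n)
    show ?case
    proof
      assume "1 \<le> n"
      then show "lam n = lamf \<Phi> F x0 N z n"
        using lam_rec[of n] step lamf_rec[of n N \<Phi> F x0 z] by simp
    qed
  qed
  show ?thesis
  proof (intro allI impI)
    fix j assume jN: "j \<le> N"
    have "hessian_entry (cost \<Phi> F N x0) z i j =
           deriv (\<lambda>v. Hik \<Phi> F i j (state F x0 z j) v (lamf \<Phi> F x0 N z (j + 1)) (\<alpha> (j + 1)) (\<beta> j)) (z j)"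
    proof (rule SO[where ?x0.0=x0 and z=z and \<alpha>=\<alpha> and \<beta>=\<beta>, OF i_le jN beta_0 _ alpha_end])
      fix k assume "k < N"
      then show "\<beta> (k + 1) = grad (\<lambda>l. Hik \<Phi> F i k (state F x0 z k) (z k) l (\<alpha> (k + 1)) (\<beta> k))
                          (lamf \<Phi> F x0 N z (k + 1))"
        using beta_rec[of k] lam_eq[of "k+1"] by simp
    next
      fix k assume "1 \<le> k" "k \<le> N"
      then show "\<alpha> k = grad (\<lambda>y. Hik \<Phi> F i k y (z k) (lamf \<Phi> F x0 N z (k + 1)) (\<alpha> (k + 1)) (\<beta> k))
                     (state F x0 z k)"
        using alpha_rec[of k] lam_eq[of "k+1"] by simp
    qed
    then show "hessian_entry (cost \<Phi> F N x0) z i j =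
           deriv (\<lambda>v. Hik \<Phi> F i j (state F x0 z j) v (lam (j + 1)) (\<alpha> (j + 1)) (\<beta> j)) (z j)"
      using lam_eq[of "j+1"] jN by simp
  qed
qed

end
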